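(* For every finite set $I$ of positive integers, $d(I;0)=(-1)^{\#I}$, where $d(I;z)$ denotes the descent polynomial evaluated at $z=0$.
   Context: For a finite set $I$ of positive integers with $m=\max(I\cup\{0\})$, and $n>m$, $d(I;n)$ is the number of permutations $\pi\in\mathfrak S_n$ with descent set $\{i\mid\pi_i>\pi_{i+1}\}$ equal to $I$. This is a polynomial in $n$, and $d(I;z)$ denotes that polynomial evaluated at an arbitrary complex number $z$. *)

theory Defs
  imports "HOL-Combinatorics.Permutations" "HOL-Computational_Algebra.Polynomial" Complex_Main
begin

definition descent_set :: "nat \<Rightarrow> (nat \<Rightarrow> nat) \<Rightarrow> nat set" where
  "descent_set n \<pi> = {i. 1 \<le> i \<and> i < n \<and> \<pi> i > \<pi> (Suc i)}"

definition desc_count :: "nat set \<Rightarrow> nat \<Rightarrow> nat" where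
  "desc_count I n = card {\<pi>. \<pi> permutes {1..n} \<and> descent_set n \<pi> = I}"

definition desc_poly :: "nat set \<Rightarrow> complex poly" where
  "desc_poly I = (THE p. \<forall>n. n > Max (I \<union> {0}) \<longrightarrow>
       poly p (of_nat n) = of_nat (desc_count I n))"

end

theory Submission
  imports Defs
begin

definition rk :: "nat set \<Rightarrow> nat \<Rightarrow> nat" where
  "rk S x = card {y\<in>S. y \<le> x}"

definition en :: "nat set \<Rightarrow> nat \<Rightarrow> nat" where
  "en S i = inv_into S (rk S) i"

lemma rk_less:
  assumes "finite S" "x \<in> S" "y \<in> S" "x < y"
  shows "rk S x < rk S y"
  unfolding rk_def
proof (rule psubset_card_mono)
  show "finite {ya \<in> S. ya \<le> y}" using assms by auto
  have a: "y \<in> {ya \<in> S. ya \<le> y}" "y \<notin> {y \<in> S. y \<le> x}" using assms by auto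
  have b: "{y \<in> S. y \<le> x} \<subseteq> {ya \<in> S. ya \<le> y}" using assms by auto
  show "{y \<in> S. y \<le> x} \<subset> {ya \<in> S. ya \<le> y}" using a b by blast
qed

lemma rk_inj: "finite S \<Longrightarrow> inj_on (rk S) S"
  by (metis inj_onI linorder_neq_iff rk_less less_irrefl)

lemma rk_range: 
  assumes "finite S" "x \<in> S" shows "rk S x \<in> {1..card S}"
proof -
  have "{y\<in>S. y \<le> x} \<noteq> {}" using assms by auto
  hence "rk S x \<ge> 1" unfolding rk_def using assms
    by (simp add: Suc_leI card_gt_0_iff)
  moreover have "rk S x \<le> card S" unfolding rk_def using assms by (intro card_mono) auto
  ultimately show ?thesis by auto
qed

lemma rk_bij: "finite S \<Longrightarrow> bij_betw (rk S) S {1..card S}"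
proof -
  assume f: "finite S"
  have "rk S ` S \<subseteq> {1..card S}" using rk_range f by auto
  moreover have "card (rk S ` S) = card S" using card_image rk_inj f by blast
  ultimately have "rk S ` S = {1..card S}"
    by (simp add: card_subset_eq)
  thus ?thesis using rk_inj f by (simp add: bij_betw_def)
qed

lemma en_in: "finite S \<Longrightarrow> i \<in> {1..card S} \<Longrightarrow> en S i \<in> S"
  unfolding en_def by (metis bij_betw_def inv_into_into rk_bij)

lemma rk_en: "finite S \<Longrightarrow> i \<in> {1..card S} \<Longrightarrow> rk S (en S i) = i"
  unfolding en_def by (metis bij_betw_def f_inv_into_f rk_bij)

lemma en_rk: "finite S \<Longrightarrow> x \<in> S \<Longrightarrow> en S (rk S x) = x"
  unfolding en_def by (meson inv_into_f_f rk_inj)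

lemma en_less:
  assumes "finite S" "i \<in> {1..card S}" "j \<in> {1..card S}" "i < j"
  shows "en S i < en S j"
proof (rule ccontr)
  assume "\<not> en S i < en S j"
  hence "en S j < en S i \<or> en S j = en S i" by auto
  thus False
  proof
    assume "en S j < en S i"
    hence "rk S (en S j) < rk S (en S i)" using rk_less assms en_in by blast
    thus False using assms rk_en by simp
  next
    assume "en S j = en S i"
    hence "rk S (en S j) = rk S (en S i)" by simp
    thus False using assms rk_en by simp
  qed
qed

lemma rk_unique:
  assumes "finite T" "\<And>x y. x \<in> {a<..b} \<Longrightarrow> y \<in> {a<..b} \<Longrightarrow> x < y \<Longrightarrow> f x < f y"
    "f ` {a<..b} = T" "x \<in> {a<..b}"
  shows "rk T (f x) = x - a"
proof -
  have inj: "inj_on f {a<..b}"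
    by (metis assms(2) inj_onI linorder_neq_iff less_irrefl)
  have "{y\<in>T. y \<le> f x} = f ` {a<..x}"
  proof
    show "{y \<in> T. y \<le> f x} \<subseteq> f ` {a<..x}"
    proof
      fix y assume "y \<in> {y \<in> T. y \<le> f x}"
      then obtain i where i: "i \<in> {a<..b}" "y = f i" "f i \<le> f x" using assms(3) by auto
      have "i \<le> x" using assms(2)[of x i] i assms(4) by (meson leD not_le_imp_less)
      thus "y \<in> f ` {a<..x}" using i by auto
    qed
  next
    show "f ` {a<..x} \<subseteq> {y \<in> T. y \<le> f x}"
    proof
      fix y assume "y \<in> f ` {a<..x}"
      then obtain i where i: "i \<in> {a<..x}" "y = f i" by auto
      have "f i \<le> f x" using assms(2)[of i x] i assms(4) by (cases "i = x") auto
      thus "y \<in> {y \<in> T. y \<le> f x}" using i assms(3,4) by auto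
    qed
  qed
  moreover have "card (f ` {a<..x}) = card {a<..x}"
    by (rule card_image, rule inj_on_subset[OF inj]) (use assms(4) in auto)
  ultimately show ?thesis unfolding rk_def by simp
qed

lemma consec_mono:
  fixes f :: "nat \<Rightarrow> nat"
  assumes "\<And>i. a \<le> i \<Longrightarrow> Suc i \<le> b \<Longrightarrow> f i < f (Suc i)"
  shows "a \<le> x \<Longrightarrow> x < y \<Longrightarrow> y \<le> b \<Longrightarrow> f x < f y"
proof (induction y)
  case 0 then show ?case by simp
next
  case (Suc y)
  show ?case
  proof (cases "x = y")
    case True then show ?thesis using assms Suc by auto
  next
    case False
    then have "f x < f y" using Suc by auto
    also have "f y < f (Suc y)" using assms Suc by auto
    finally show ?thesis .
  qed
qed


lemma fiber_card:
  fixes n m :: nat and J S :: "nat set"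
  assumes mn: "m \<le> n" and J: "J \<subseteq> {1..<m}" and S: "S \<subseteq> {1..n}" "card S = m"
  shows "card {\<pi>. \<pi> permutes {1..n} \<and> descent_set n \<pi> - {m} = J \<and> \<pi> ` {1..m} = S}
       = card {\<sigma>. \<sigma> permutes {1..m} \<and> descent_set m \<sigma> = J}"
proof -
  define T where "T = {1..n} - S"
  define F where "F = {\<pi>. \<pi> permutes {1..n} \<and> descent_set n \<pi> - {m} = J \<and> \<pi> ` {1..m} = S}"
  define D where "D = {\<sigma>. \<sigma> permutes {1..m} \<and> descent_set m \<sigma> = J}"
  define \<phi> where "\<phi> = (\<lambda>\<sigma>::nat\<Rightarrow>nat. \<lambda>i. if i \<in> {1..m} then en S (\<sigma> i)
      else if i \<in> {m<..n} then en T (i - m) else i)"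
  define \<psi> where "\<psi> = (\<lambda>\<pi>::nat\<Rightarrow>nat. \<lambda>i. if i \<in> {1..m} then rk S (\<pi> i) else i)"
  have finS: "finite S" using S finite_subset by blast
  have finT: "finite T" unfolding T_def by auto
  have cardT: "card T = n - m" unfolding T_def using S by (simp add: card_Diff_subset finS)
  have ST: "S \<inter> T = {}" unfolding T_def by auto
  have rkS_less_iff: "rk S a < rk S b \<longleftrightarrow> a < b" if "a \<in> S" "b \<in> S" for a b
    using rk_less[OF finS] that by (metis less_asym linorder_neq_iff)
  have enS_less_iff: "en S a < en S b \<longleftrightarrow> a < b" if "a \<in> {1..m}" "b \<in> {1..m}" for a b
    using en_less[OF finS] that S(2) by (metis less_asym linorder_neq_iff)
  have Fprops: "\<pi> ` {m<..n} = T \<and> (\<forall>x\<in>{m<..n}. rk T (\<pi> x) = x - m)" if "\<pi> \<in> F" for \<pi>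
  proof -
    have p: "\<pi> permutes {1..n}" and d: "descent_set n \<pi> - {m} = J" and im: "\<pi> ` {1..m} = S"
      using that unfolding F_def by auto
    have inj: "inj \<pi>" using p permutes_inj by blast
    have "{m<..n} = {1..n} - {1..m}" by auto
    hence "\<pi> ` {m<..n} = \<pi> ` {1..n} - \<pi> ` {1..m}" using inj by (simp add: image_set_diff)
    hence imT: "\<pi> ` {m<..n} = T" unfolding T_def using im permutes_image[OF p] by simp
    have step: "\<pi> i < \<pi> (Suc i)" if "Suc m \<le> i" "Suc i \<le> n" for i
    proof -
      have "i \<notin> J" using J that by auto
      hence "i \<notin> descent_set n \<pi>" using d that by auto
      hence "\<pi> i \<le> \<pi> (Suc i)" using that unfolding descent_set_def by auto
      moreover have "\<pi> i \<noteq> \<pi> (Suc i)" using inj by (metis n_not_Suc_n injD)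
      ultimately show ?thesis by simp
    qed
    have mono: "\<pi> x < \<pi> y" if "x \<in> {m<..n}" "y \<in> {m<..n}" "x < y" for x y
      using consec_mono[of "Suc m" n \<pi> x y, OF step] that by auto
    show ?thesis using rk_unique[OF finT mono imT] imT by auto
  qed
  have psiD: "\<psi> \<pi> \<in> D" if "\<pi> \<in> F" for \<pi>
  proof -
    have p: "\<pi> permutes {1..n}" and d: "descent_set n \<pi> - {m} = J" and im: "\<pi> ` {1..m} = S"
      using that unfolding F_def by auto
    have inj: "inj \<pi>" using p permutes_inj by blast
    have b1: "bij_betw \<pi> {1..m} S" using im inj by (simp add: bij_betw_def) (metis inj_on_subset subset_UNIV)
    have "bij_betw (rk S \<circ> \<pi>) {1..m} {1..m}"
      using bij_betw_trans[OF b1 rk_bij[OF finS]] S(2) by simp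
    moreover have "bij_betw (\<psi> \<pi>) {1..m} {1..m} = bij_betw (rk S \<circ> \<pi>) {1..m} {1..m}"
      by (rule bij_betw_cong) (simp add: \<psi>_def)
    ultimately have "bij_betw (\<psi> \<pi>) {1..m} {1..m}" by simp
    moreover have out: "\<psi> \<pi> x = x" if "x \<notin> {1..m}" for x
      unfolding \<psi>_def by (simp only: if_not_P[OF that] if_False)
    ultimately have perm: "\<psi> \<pi> permutes {1..m}"
      using bij_imp_permutes by blast
    have "descent_set m (\<psi> \<pi>) = J"
    proof (rule set_eqI)
      fix i
      show "i \<in> descent_set m (\<psi> \<pi>) \<longleftrightarrow> i \<in> J"
      proof (cases "1 \<le> i \<and> i < m")
        case True
        have "\<pi> i \<in> S" "\<pi> (Suc i) \<in> S" using True im by auto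
        hence "rk S (\<pi> (Suc i)) < rk S (\<pi> i) \<longleftrightarrow> \<pi> (Suc i) < \<pi> i" using rkS_less_iff by blast
        moreover have "i \<in> J \<longleftrightarrow> i \<in> descent_set n \<pi>" using d True by auto
        ultimately show ?thesis using True mn unfolding descent_set_def \<psi>_def by auto
      next
        case False
        then show ?thesis using J unfolding descent_set_def by auto
      qed
    qed
    thus ?thesis using perm unfolding D_def by simp
  qed
  have phiF: "\<phi> \<sigma> \<in> F" if "\<sigma> \<in> D" for \<sigma>
  proof -
    have p: "\<sigma> permutes {1..m}" and d: "descent_set m \<sigma> = J" using that unfolding D_def by auto
    have sin: "\<sigma> i \<in> {1..m}" if "i \<in> {1..m}" for i using permutes_in_image[OF p] that by blast
    have sinj: "inj \<sigma>" using permutes_inj[OF p] .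
    have enSinj: "a = b" if "a \<in> {1..m}" "b \<in> {1..m}" "en S a = en S b" for a b
    proof -
      have "rk S (en S a) = rk S (en S b)" using that(3) by simp
      thus ?thesis using rk_en[OF finS, of a] rk_en[OF finS, of b] that(1,2) S(2) by simp
    qed
    have enTinj: "a = b" if "a \<in> {1..n-m}" "b \<in> {1..n-m}" "en T a = en T b" for a b
    proof -
      have "rk T (en T a) = rk T (en T b)" using that(3) by simp
      thus ?thesis using rk_en[OF finT, of a] rk_en[OF finT, of b] that(1,2) cardT by simp
    qed
    have inj: "inj_on (\<phi> \<sigma>) {1..n}"
    proof (rule inj_onI)
      fix x y assume xy: "x \<in> {1..n}" "y \<in> {1..n}" "\<phi> \<sigma> x = \<phi> \<sigma> y"
      show "x = y"
      proof (cases "x \<in> {1..m}"; cases "y \<in> {1..m}")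
        assume a: "x \<in> {1..m}" "y \<in> {1..m}"
        hence "en S (\<sigma> x) = en S (\<sigma> y)" using xy by (simp add: \<phi>_def)
        hence "\<sigma> x = \<sigma> y" using enSinj sin a by blast
        thus ?thesis using sinj injD by metis
      next
        assume a: "x \<in> {1..m}" "y \<notin> {1..m}"
        hence "\<phi> \<sigma> x \<in> S" using en_in[OF finS] sin S(2) by (simp add: \<phi>_def)
        moreover have "\<phi> \<sigma> y \<in> T"
        proof -
          have "y - m \<in> {1..card T}" using a xy cardT by auto
          hence "en T (y - m) \<in> T" using en_in[OF finT] by blast
          thus ?thesis using a xy by (simp add: \<phi>_def)
        qed
        ultimately show ?thesis using xy ST by auto
      next
        assume a: "x \<notin> {1..m}" "y \<in> {1..m}"
        hence "\<phi> \<sigma> y \<in> S" using en_in[OF finS] sin S(2) by (simp add: \<phi>_def)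
        moreover have "\<phi> \<sigma> x \<in> T"
        proof -
          have "x - m \<in> {1..card T}" using a xy cardT by auto
          hence "en T (x - m) \<in> T" using en_in[OF finT] by blast
          thus ?thesis using a xy by (simp add: \<phi>_def)
        qed
        ultimately show ?thesis using xy ST by auto
      next
        assume a: "x \<notin> {1..m}" "y \<notin> {1..m}"
        hence "en T (x - m) = en T (y - m)" using xy by (auto simp: \<phi>_def)
        moreover have "x - m \<in> {1..n-m}" "y - m \<in> {1..n-m}" using a xy by auto
        ultimately have "x - m = y - m" using enTinj by blast
        thus ?thesis using a xy by auto
      qed
    qed
    have sub: "\<phi> \<sigma> ` {1..n} \<subseteq> {1..n}"
    proof
      fix y assume "y \<in> \<phi> \<sigma> ` {1..n}"
      then obtain x where x: "x \<in> {1..n}" "y = \<phi> \<sigma> x" by auto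
      show "y \<in> {1..n}"
      proof (cases "x \<in> {1..m}")
        case True
        hence "y \<in> S" using x en_in[OF finS] sin S(2) by (simp add: \<phi>_def)
        thus ?thesis using S by auto
      next
        case False
        have "x - m \<in> {1..card T}" using False x cardT by auto
        hence "en T (x - m) \<in> T" using en_in[OF finT] by blast
        hence "y \<in> T" using x False by (simp add: \<phi>_def)
        thus ?thesis unfolding T_def by auto
      qed
    qed
    have "bij_betw (\<phi> \<sigma>) {1..n} {1..n}"
      using endo_inj_surj[OF _ sub inj] inj by (simp add: bij_betw_def)
    moreover have out: "\<phi> \<sigma> x = x" if "x \<notin> {1..n}" for x
    proof -
      have "x \<notin> {1..m}" "x \<notin> {m<..n}" using that mn by auto
      thus ?thesis unfolding \<phi>_def by (simp only: if_not_P if_False)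
    qed
    ultimately have perm: "\<phi> \<sigma> permutes {1..n}" using bij_imp_permutes by blast
    have "\<phi> \<sigma> ` {1..m} = (en S \<circ> \<sigma>) ` {1..m}"
      by (rule image_cong) (simp_all add: \<phi>_def)
    also have "\<dots> = en S ` \<sigma> ` {1..m}" by (simp only: image_comp)
    also have "\<dots> = en S ` {1..m}" using permutes_image[OF p] by simp
    also have "\<dots> = S"
      using bij_betw_inv_into[OF rk_bij[OF finS]] S(2) unfolding en_def bij_betw_def by simp
    finally have im: "\<phi> \<sigma> ` {1..m} = S" .
    have "descent_set n (\<phi> \<sigma>) - {m} = J"
    proof (rule set_eqI)
      fix i
      show "i \<in> descent_set n (\<phi> \<sigma>) - {m} \<longleftrightarrow> i \<in> J"
      proof (cases "1 \<le> i \<and> i < m")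
        case True
        have "en S (\<sigma> (Suc i)) < en S (\<sigma> i) \<longleftrightarrow> \<sigma> (Suc i) < \<sigma> i"
          using enS_less_iff sin True by auto
        then show ?thesis using True mn d unfolding descent_set_def \<phi>_def by auto
      next
        case False
        have "i \<notin> descent_set n (\<phi> \<sigma>)" if "m < i"
        proof
          assume "i \<in> descent_set n (\<phi> \<sigma>)"
          hence i: "i < n" "\<phi> \<sigma> (Suc i) < \<phi> \<sigma> i" unfolding descent_set_def by auto
          hence "en T (Suc i - m) < en T (i - m)" using that by (simp add: \<phi>_def)
          moreover have "en T (i - m) < en T (Suc i - m)"
            using en_less[OF finT] cardT that i by auto
          ultimately show False by simp
        qed
        then show ?thesis using False J unfolding descent_set_def by auto
      qed
    qed
    thus ?thesis using perm im unfolding F_def by simp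
  qed
  have "bij_betw \<phi> D F"
  proof (rule bij_betw_byWitness[where f'=\<psi>])
    show "\<forall>a\<in>D. \<psi> (\<phi> a) = a"
    proof
      fix \<sigma> assume a: "\<sigma> \<in> D"
      hence p: "\<sigma> permutes {1..m}" unfolding D_def by auto
      show "\<psi> (\<phi> \<sigma>) = \<sigma>"
      proof (rule ext)
        fix i show "\<psi> (\<phi> \<sigma>) i = \<sigma> i"
        proof (cases "i \<in> {1..m}")
          case True
          have si: "\<sigma> i \<in> {1..m}" using permutes_in_image[OF p] True by blast
          have e1: "\<phi> \<sigma> i = en S (\<sigma> i)" using True unfolding \<phi>_def by (simp only: if_P)
          have e2: "\<psi> (\<phi> \<sigma>) i = rk S (\<phi> \<sigma> i)" using True unfolding \<psi>_def by (simp only: if_P)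
          have e3: "rk S (en S (\<sigma> i)) = \<sigma> i" using rk_en[OF finS] S(2) si by metis
          show ?thesis using e1 e2 e3 by simp
        next
          case False
          have s1: "\<sigma> i = i" using p permutes_not_in False by metis
          have e2: "\<psi> (\<phi> \<sigma>) i = i" using False unfolding \<psi>_def by (simp only: if_not_P if_False)
          show ?thesis using s1 e2 by simp
        qed
      qed
    qed
    show "\<forall>a'\<in>F. \<phi> (\<psi> a') = a'"
    proof
      fix \<pi> assume a: "\<pi> \<in> F"
      hence p: "\<pi> permutes {1..n}" and im: "\<pi> ` {1..m} = S" unfolding F_def by auto
      show "\<phi> (\<psi> \<pi>) = \<pi>"
      proof (rule ext)
        fix i show "\<phi> (\<psi> \<pi>) i = \<pi> i"
        proof (cases "i \<in> {1..m}")
          case True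
          hence "\<pi> i \<in> S" using im by auto
          then show ?thesis using True en_rk[OF finS] by (simp add: \<psi>_def \<phi>_def)
        next
          case False
          show ?thesis
          proof (cases "i \<in> {m<..n}")
            case True
            have "rk T (\<pi> i) = i - m" "\<pi> i \<in> T" using Fprops[OF a] True by auto
            hence "en T (i - m) = \<pi> i" using en_rk[OF finT] by metis
            then show ?thesis using True False by (simp add: \<psi>_def \<phi>_def)
          next
            case False2: False
            hence "i \<notin> {1..n}" using False by auto
            have "\<pi> i = i" using p permutes_not_in \<open>i \<notin> {1..n}\<close> by metis
            moreover have "\<phi> (\<psi> \<pi>) i = i" unfolding \<phi>_def using False False2
              by (simp only: if_not_P if_False)
            ultimately show ?thesis by simp
          qed
        qed
      qed
    qed
    show "\<phi> ` D \<subseteq> F" using phiF by auto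
    show "\<psi> ` F \<subseteq> D" using psiD by auto
  qed
  hence "card D = card F" by (rule bij_betw_same_card)
  thus ?thesis unfolding D_def F_def by simp
qed


lemma main_count:
  fixes n m :: nat and J :: "nat set"
  assumes mn: "m \<le> n" and J: "J \<subseteq> {1..<m}"
  shows "card {\<pi>. \<pi> permutes {1..n} \<and> descent_set n \<pi> - {m} = J} = (n choose m) * desc_count J m"
proof -
  define SS where "SS = {S. S \<subseteq> {1..n} \<and> card S = m}"
  define F where "F = (\<lambda>S. {\<pi>. \<pi> permutes {1..n} \<and> descent_set n \<pi> - {m} = J \<and> \<pi> ` {1..m} = S})"
  have eq: "{\<pi>. \<pi> permutes {1..n} \<and> descent_set n \<pi> - {m} = J} = \<Union> (F ` SS)"
  proof
    show "{\<pi>. \<pi> permutes {1..n} \<and> descent_set n \<pi> - {m} = J} \<subseteq> \<Union> (F ` SS)"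
    proof
      fix \<pi> assume a: "\<pi> \<in> {\<pi>. \<pi> permutes {1..n} \<and> descent_set n \<pi> - {m} = J}"
      hence p: "\<pi> permutes {1..n}" by auto
      have "\<pi> ` {1..m} \<subseteq> {1..n}" using permutes_image[OF p] mn by auto
      moreover have "card (\<pi> ` {1..m}) = m"
        using card_image permutes_inj_on[OF p] by (metis card_atLeastAtMost diff_Suc_1)
      ultimately have "\<pi> ` {1..m} \<in> SS" unfolding SS_def by auto
      thus "\<pi> \<in> \<Union> (F ` SS)" using a unfolding F_def by auto
    qed
    show "\<Union> (F ` SS) \<subseteq> {\<pi>. \<pi> permutes {1..n} \<and> descent_set n \<pi> - {m} = J}"
      unfolding F_def by auto
  qed
  have finSS: "finite SS" unfolding SS_def by (rule finite_subset[of _ "Pow {1..n}"]) auto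
  have finF: "\<forall>S\<in>SS. finite (F S)"
    unfolding F_def by (auto intro: finite_subset[OF _ finite_permutations[of "{1..n}"]])
  have disj: "\<forall>S\<in>SS. \<forall>S'\<in>SS. S \<noteq> S' \<longrightarrow> F S \<inter> F S' = {}" unfolding F_def by auto
  have "card (\<Union> (F ` SS)) = (\<Sum>S\<in>SS. card (F S))" by (rule card_UN_disjoint[OF finSS finF disj])
  also have "\<dots> = (\<Sum>S\<in>SS. desc_count J m)"
  proof (rule sum.cong)
    fix S assume "S \<in> SS"
    thus "card (F S) = desc_count J m"
      unfolding F_def desc_count_def SS_def using fiber_card[OF mn J] by auto
  qed simp
  also have "\<dots> = card SS * desc_count J m" by simp
  also have "card SS = n choose m" unfolding SS_def using n_subsets[of "{1..n}" m] by simp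
  finally show ?thesis using eq by simp
qed

lemma desc_count_empty: "desc_count {} n = 1"
proof -
  have "card {\<pi>. \<pi> permutes {1..n} \<and> descent_set n \<pi> - {0} = {}} = (n choose 0) * desc_count {} 0"
    by (rule main_count) auto
  moreover have "descent_set n \<pi> - {0} = descent_set n \<pi>" for \<pi>
    unfolding descent_set_def by auto
  moreover have "{\<sigma>. \<sigma> permutes {1..0::nat} \<and> descent_set 0 \<sigma> = {}} = {id}"
    unfolding descent_set_def by auto
  ultimately show ?thesis unfolding desc_count_def by simp
qed

lemma recursion:
  assumes "finite I" "\<forall>i\<in>I. 0 < i" "m \<in> I" "\<forall>i\<in>I. i \<le> m" "m \<le> n"
  shows "desc_count (I - {m}) n + desc_count I n = (n choose m) * desc_count (I - {m}) m"
proof -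
  have J: "I - {m} \<subseteq> {1..<m}" using assms by force
  have "{\<pi>. \<pi> permutes {1..n} \<and> descent_set n \<pi> - {m} = I - {m}}
      = {\<pi>. \<pi> permutes {1..n} \<and> descent_set n \<pi> = I - {m}} \<union> {\<pi>. \<pi> permutes {1..n} \<and> descent_set n \<pi> = I}"
  proof -
    have "descent_set n \<pi> - {m} = I - {m} \<longleftrightarrow> descent_set n \<pi> = I - {m} \<or> descent_set n \<pi> = I" for \<pi>
      using assms(3) by blast
    thus ?thesis by auto
  qed
  moreover have "card ({\<pi>. \<pi> permutes {1..n} \<and> descent_set n \<pi> = I - {m}} \<union> {\<pi>. \<pi> permutes {1..n} \<and> descent_set n \<pi> = I})
      = desc_count (I - {m}) n + desc_count I n"
    unfolding desc_count_def
    by (rule card_Un_disjoint) (use assms(3) finite_permutations[of "{1..n}"] in \<open>auto intro: finite_subset\<close>)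
  ultimately show ?thesis using main_count[OF assms(5) J] by simp
qed

definition bpoly :: "nat \<Rightarrow> complex poly" where
  "bpoly m = smult (inverse (fact m)) (\<Prod>i<m. [:- of_nat i, 1:])"

lemma bpoly_nat: "poly (bpoly m) (of_nat n) = of_nat (n choose m)"
  unfolding bpoly_def binomial_gbinomial gbinomial_prod_rev
  by (simp add: poly_prod lessThan_atLeast0 field_simps)

lemma bpoly_0: "0 < m \<Longrightarrow> poly (bpoly m) 0 = 0"
  unfolding bpoly_def by (simp add: poly_prod prod_zero_iff)

lemma ex_poly:
  "finite I \<Longrightarrow> \<forall>i\<in>I. 0 < i \<Longrightarrow> \<exists>p::complex poly. (\<forall>n. Max (I \<union> {0}) < n \<longrightarrow> poly p (of_nat n) = of_nat (desc_count I n))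
     \<and> poly p 0 = (-1) ^ card I"
proof (induction "card I" arbitrary: I)
  case 0
  hence "I = {}" using card_0_eq by metis
  thus ?case by (intro exI[of _ "[:1:]"]) (simp add: desc_count_empty)
next
  case (Suc k)
  have ne: "I \<noteq> {}" using Suc.hyps(2) by (metis card.empty nat.distinct(1))
  define m where "m = Max I"
  have mI: "m \<in> I" using Max_in[OF Suc.prems(1) ne] m_def by simp
  have mle: "\<forall>i\<in>I. i \<le> m" using Suc.prems(1) m_def by simp
  have m0: "0 < m" using mI Suc.prems(2) by auto
  define J where "J = I - {m}"
  have cJ: "k = card J" using Suc.hyps(2) mI Suc.prems(1) unfolding J_def by simp
  have fJ: "finite J" "\<forall>i\<in>J. 0 < i" using Suc.prems unfolding J_def by auto
  obtain q :: "complex poly" where q: "\<forall>n. Max (J \<union> {0}) < n \<longrightarrow> poly q (of_nat n) = of_nat (desc_count J n)"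
      "poly q 0 = (-1) ^ card J"
    using Suc.hyps(1)[OF cJ fJ] by blast
  have MJ: "Max (J \<union> {0}) \<le> m" using Suc.prems(1) mle unfolding J_def by (intro Max.boundedI) auto
  have MI: "Max (I \<union> {0}) = m" using Suc.prems(1) mle mI by (intro Max_eqI) auto
  have cI: "card I = Suc (card J)" using Suc.hyps(2) cJ by simp
  define p where "p = smult (of_nat (desc_count J m)) (bpoly m) - q"
  show ?case
  proof (intro exI[of _ p] conjI allI impI)
    fix n assume "Max (I \<union> {0}) < n"
    hence n: "m < n" using MI by simp
    have r: "desc_count J n + desc_count I n = (n choose m) * desc_count J m"
      using recursion[OF Suc.prems(1,2) mI mle] n unfolding J_def by simp
    have r': "desc_count J m * (n choose m) = desc_count J n + desc_count I n"
      using r by (simp add: mult.commute)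
    have E: "of_nat (desc_count J m) * of_nat (n choose m) = (of_nat (desc_count J n) :: complex) + of_nat (desc_count I n)"
      using arg_cong[OF r', of "of_nat :: nat \<Rightarrow> complex"] by simp
    have Q: "poly q (of_nat n) = of_nat (desc_count J n)" using q(1) MJ n by auto
    have "poly p (of_nat n) = of_nat (desc_count J m) * of_nat (n choose m) - of_nat (desc_count J n)"
      unfolding p_def by (simp only: poly_diff poly_smult bpoly_nat Q)
    also have "\<dots> = of_nat (desc_count I n)" by (simp only: E add_diff_cancel_left')
    finally show "poly p (of_nat n) = of_nat (desc_count I n)" .
  next
    have "poly p 0 = - poly q 0" unfolding p_def using bpoly_0[OF m0] by simp
    thus "poly p 0 = (-1) ^ card I" using q(2) cI by simp
  qed
qed

lemma poly_unique:
  fixes p q :: "complex poly"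
  assumes "\<forall>n. M < n \<longrightarrow> poly p (of_nat n) = poly q (of_nat n)"
  shows "p = q"
proof (rule ccontr)
  assume "p \<noteq> q"
  hence "p - q \<noteq> 0" by simp
  hence fin: "finite {x. poly (p - q) x = 0}" by (rule poly_roots_finite)
  have "of_nat ` {M<..} \<subseteq> {x. poly (p - q) x = 0}" using assms by auto
  hence "finite ((of_nat :: nat \<Rightarrow> complex) ` {M<..})" using fin finite_subset by blast
  hence "finite {M<..}" using finite_imageD inj_of_nat inj_on_subset by (metis subset_UNIV)
  thus False using infinite_Ioi by blast
qed

theorem lemma3p8:
  fixes I :: "nat set"
  assumes "finite I" and "\<forall>i\<in>I. 0 < i"
  shows "poly (desc_poly I) 0 = (-1) ^ card I"
proof -
  obtain p :: "complex poly" where p: "\<forall>n. Max (I \<union> {0}) < n \<longrightarrow> poly p (of_nat n) = of_nat (desc_count I n)"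
      "poly p 0 = (-1) ^ card I"
    using ex_poly[OF assms] by blast
  have "desc_poly I = p"
    unfolding desc_poly_def
  proof (rule the_equality)
    show "\<forall>n. Max (I \<union> {0}) < n \<longrightarrow> poly p (of_nat n) = of_nat (desc_count I n)" by (rule p(1))
    fix p' :: "complex poly" assume "\<forall>n. Max (I \<union> {0}) < n \<longrightarrow> poly p' (of_nat n) = of_nat (desc_count I n)"
    thus "p' = p" using p(1) by (intro poly_unique[of "Max (I \<union> {0})"]) auto
  qed
  thus ?thesis using p(2) by simp
qed

end
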